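(* A permutation $\varpi\in S_n$ is amenable if and only if $\varpi$ is vexillary, i.e. $2143$-avoiding.
   Context: $S_n$ is the symmetric group in one-line notation; $\ell$ denotes length (number of inversions). A permutation is $v$-avoiding if it contains no subword with the same relative order as $v$. The code of $\varpi$ is $\gamma_i:=\#\{j>i\mid\varpi_j<\varpi_i\}$, and $\varpi$ is dominant if its code is weakly decreasing (equivalently, $\varpi$ is $132$-avoiding). A (right) modification of $\varpi$ is $\varpi\omega$ with $\omega\in S_n$ $231$-avoiding and $\ell(\varpi\omega)=\ell(\varpi)-\ell(\omega)$. A permutation is amenable if it is a modification of a dominant permutation. *)

theory Defs
  imports "HOL-Combinatorics.Permutations"
begin

text \<open>Permutations of S_n are functions w :: nat => nat with w permutes {..<n};
  the one-line notation is w 0, w 1, ..., w (n-1) (0-based positions and values).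
  Products: (w o u) i = w (u i), so right multiplication by u acts on positions.\<close>

definition len :: "nat \<Rightarrow> (nat \<Rightarrow> nat) \<Rightarrow> nat" where
  "len n w = card {(i, j). i < j \<and> j < n \<and> w j < w i}"

definition perm_code :: "nat \<Rightarrow> (nat \<Rightarrow> nat) \<Rightarrow> nat \<Rightarrow> nat" where
  "perm_code n w i = card {j. i < j \<and> j < n \<and> w j < w i}"

definition contains_pattern :: "nat \<Rightarrow> (nat \<Rightarrow> nat) \<Rightarrow> nat list \<Rightarrow> bool" where
  "contains_pattern n w v \<longleftrightarrow>
     (\<exists>f :: nat \<Rightarrow> nat.
        (\<forall>a b. a < b \<and> b < length v \<longrightarrow> f a < f b) \<and>
        (\<forall>a < length v. f a < n) \<and>
        (\<forall>a < length v. \<forall>b < length v. (w (f a) < w (f b) \<longleftrightarrow> v ! a < v ! b)))"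

definition avoids :: "nat \<Rightarrow> (nat \<Rightarrow> nat) \<Rightarrow> nat list \<Rightarrow> bool" where
  "avoids n w v \<longleftrightarrow> \<not> contains_pattern n w v"

definition dominant :: "nat \<Rightarrow> (nat \<Rightarrow> nat) \<Rightarrow> bool" where
  "dominant n w \<longleftrightarrow> (\<forall>i j. i \<le> j \<and> j < n \<longrightarrow> perm_code n w j \<le> perm_code n w i)"

text \<open>231 in 0-based one-line notation is [1,2,0]; 2143 is [1,0,3,2].\<close>
definition modification :: "nat \<Rightarrow> (nat \<Rightarrow> nat) \<Rightarrow> (nat \<Rightarrow> nat) \<Rightarrow> bool" where
  "modification n d w \<longleftrightarrow>
     (\<exists>u. u permutes {..<n} \<and> avoids n u [1, 2, 0] \<and> w = d \<circ> u \<and>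
          len n (d \<circ> u) + len n u = len n d)"

definition amenable :: "nat \<Rightarrow> (nat \<Rightarrow> nat) \<Rightarrow> bool" where
  "amenable n w \<longleftrightarrow> (\<exists>d. d permutes {..<n} \<and> dominant n d \<and> modification n d w)"

definition vexillary :: "nat \<Rightarrow> (nat \<Rightarrow> nat) \<Rightarrow> bool" where
  "vexillary n w \<longleftrightarrow> avoids n w [1, 0, 3, 2]"

end

theory Submission
  imports Defs
begin

lemma less3_cases: "(x::nat) < 3 \<longleftrightarrow> x = 0 \<or> x = 1 \<or> x = 2" by auto
lemma less4_cases: "(x::nat) < 4 \<longleftrightarrow> x = 0 \<or> x = 1 \<or> x = 2 \<or> x = 3" by auto

lemma contains_2143:
  "contains_pattern n w [1,0,3,2] \<longleftrightarrow>
    (\<exists>a b c e. a < b \<and> b < c \<and> c < e \<and> e < n \<and> w b < w a \<and> w a < w e \<and> w e < w c)"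
proof
  assume "contains_pattern n w [1,0,3,2]"
  then obtain f where f1: "\<forall>a b. a < b \<and> b < length [1,0,3,2::nat] \<longrightarrow> f a < f b"
    and f2: "\<forall>a < length [1,0,3,2::nat]. f a < n"
    and f3: "\<forall>a < length [1,0,3,2::nat]. \<forall>b < length [1,0,3,2::nat]. (w (f a) < w (f b) \<longleftrightarrow> [1,0,3,2::nat] ! a < [1,0,3,2] ! b)"
    unfolding contains_pattern_def by blast
  have "f 0 < f 1" "f 1 < f 2" "f 2 < f 3" "f 3 < n" using f1 f2 by auto
  moreover have "w (f 1) < w (f 0)" using f3[rule_format, of 1 0] by simp
  moreover have "w (f 0) < w (f 3)" using f3[rule_format, of 0 3] by simp
  moreover have "w (f 3) < w (f 2)" using f3[rule_format, of 3 2] by simp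
  ultimately show "\<exists>a b c e. a < b \<and> b < c \<and> c < e \<and> e < n \<and> w b < w a \<and> w a < w e \<and> w e < w c"
    by blast
next
  assume "\<exists>a b c e. a < b \<and> b < c \<and> c < e \<and> e < n \<and> w b < w a \<and> w a < w e \<and> w e < w c"
  then obtain a b c e where h: "a < b" "b < c" "c < e" "e < n" "w b < w a" "w a < w e" "w e < w c"
    by blast
  define f where "f = (\<lambda>i::nat. if i = 0 then a else if i = 1 then b else if i = 2 then c else e)"
  have "\<forall>x y. x < y \<and> y < 4 \<longrightarrow> f x < f y"
    using h by (auto simp: f_def less4_cases)
  moreover have "\<forall>x < 4. f x < n" using h by (auto simp: f_def less4_cases)
  moreover have "\<forall>x < 4. \<forall>y < 4. (w (f x) < w (f y) \<longleftrightarrow> [1,0,3,2::nat] ! x < [1,0,3,2] ! y)"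
    using h by (auto simp: f_def less4_cases)
  ultimately show "contains_pattern n w [1,0,3,2]"
    unfolding contains_pattern_def by (intro exI[of _ f]) simp
qed

lemma contains_231:
  "contains_pattern n u [1,2,0] \<longleftrightarrow>
    (\<exists>a b c. a < b \<and> b < c \<and> c < n \<and> u c < u a \<and> u a < u b)"
proof
  assume "contains_pattern n u [1,2,0]"
  then obtain f where f1: "\<forall>a b. a < b \<and> b < length [1,2,0::nat] \<longrightarrow> f a < f b"
    and f2: "\<forall>a < length [1,2,0::nat]. f a < n"
    and f3: "\<forall>a < length [1,2,0::nat]. \<forall>b < length [1,2,0::nat]. (u (f a) < u (f b) \<longleftrightarrow> [1,2,0::nat] ! a < [1,2,0] ! b)"
    unfolding contains_pattern_def by blast
  have "f 0 < f 1" "f 1 < f 2" "f 2 < n" using f1 f2 by auto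
  moreover have "u (f 2) < u (f 0)" using f3[rule_format, of 2 0] by simp
  moreover have "u (f 0) < u (f 1)" using f3[rule_format, of 0 1] by simp
  ultimately show "\<exists>a b c. a < b \<and> b < c \<and> c < n \<and> u c < u a \<and> u a < u b"
    by blast
next
  assume "\<exists>a b c. a < b \<and> b < c \<and> c < n \<and> u c < u a \<and> u a < u b"
  then obtain a b c where h: "a < b" "b < c" "c < n" "u c < u a" "u a < u b"
    by blast
  define f where "f = (\<lambda>i::nat. if i = 0 then a else if i = 1 then b else c)"
  have "\<forall>x y. x < y \<and> y < 3 \<longrightarrow> f x < f y"
    using h by (auto simp: f_def less3_cases)
  moreover have "\<forall>x < 3. f x < n" using h by (auto simp: f_def less3_cases)
  moreover have "\<forall>x < 3. \<forall>y < 3. (u (f x) < u (f y) \<longleftrightarrow> [1,2,0::nat] ! x < [1,2,0] ! y)"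
    using h by (auto simp: f_def less3_cases)
  ultimately show "contains_pattern n u [1,2,0]"
    unfolding contains_pattern_def by (intro exI[of _ f]) simp
qed


lemma len_additive:
  assumes d: "d permutes {..<n}" and u: "u permutes {..<n}"
  shows "len n (d \<circ> u) + len n u = len n d \<longleftrightarrow>
    (\<forall>i j. i < j \<and> j < n \<and> u j < u i \<longrightarrow> \<not> d (u j) < d (u i))"
proof -
  define A1 where "A1 = {(i,j). i < j \<and> j < n \<and> d (u j) < d (u i) \<and> u i < u j}"
  define A2 where "A2 = {(i,j). i < j \<and> j < n \<and> d (u j) < d (u i) \<and> u j < u i}"
  define A3 where "A3 = {(i,j). i < j \<and> j < n \<and> d (u i) < d (u j) \<and> u j < u i}"
  have fin: "finite A" if "A \<subseteq> {..<n} \<times> {..<n}" for A :: "(nat \<times> nat) set"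
    using that finite_subset by blast
  have fA1: "finite A1" by (rule fin) (auto simp: A1_def)
  have fA2: "finite A2" by (rule fin) (auto simp: A2_def)
  have fA3: "finite A3" by (rule fin) (auto simp: A3_def)
  have uinj: "u i = u j \<Longrightarrow> i = j" for i j using permutes_inj[OF u] by (auto dest: injD)
  have dinj: "d i = d j \<Longrightarrow> i = j" for i j using permutes_inj[OF d] by (auto dest: injD)
  have "{(i, j). i < j \<and> j < n \<and> (d \<circ> u) j < (d \<circ> u) i} = A1 \<union> A2"
    using uinj by (auto simp: A1_def A2_def) (metis linorder_neqE_nat less_irrefl)
  then have L1: "len n (d \<circ> u) = card A1 + card A2"
    unfolding len_def using fA1 fA2 by (simp add: card_Un_disjoint A1_def A2_def disjoint_iff) 
  have "{(i, j). i < j \<and> j < n \<and> u j < u i} = A2 \<union> A3"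
    using dinj by (auto simp: A3_def A2_def) (metis linorder_neqE_nat less_irrefl)
  then have L2: "len n u = card A2 + card A3"
    unfolding len_def using fA2 fA3 by (simp add: card_Un_disjoint A3_def A2_def disjoint_iff) 
  define g where "g = (\<lambda>(i,j). (min (u i) (u j), max (u i) (u j)))"
  have ginj: "inj_on g (A1 \<union> A3)"
  proof (rule inj_onI)
    fix x y assume x: "x \<in> A1 \<union> A3" and y: "y \<in> A1 \<union> A3" and e: "g x = g y"
    obtain i j where xij: "x = (i,j)" "i < j" using x by (auto simp: A1_def A3_def)
    obtain i' j' where yij: "y = (i',j')" "i' < j'" using y by (auto simp: A1_def A3_def)
    have "u i \<noteq> u j" "u i' \<noteq> u j'" using xij yij uinj by auto
    then have "{u i, u j} = {u i', u j'}" using e xij yij unfolding g_def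
      by (auto simp: min_def max_def split: if_splits)
    then have "{i, j} = {i', j'}" using uinj by (auto simp: doubleton_eq_iff)
    then show "x = y" using xij yij by (auto simp: doubleton_eq_iff)
  qed
  have gim: "g ` (A1 \<union> A3) = {(p, q). p < q \<and> q < n \<and> d q < d p}"
  proof
    show "g ` (A1 \<union> A3) \<subseteq> {(p, q). p < q \<and> q < n \<and> d q < d p}"
    proof
      fix z assume "z \<in> g ` (A1 \<union> A3)"
      then obtain i j where ij: "(i,j) \<in> A1 \<union> A3" "z = g (i,j)" by auto
      have "i < n" "j < n" using ij by (auto simp: A1_def A3_def)
      then have "u i < n" "u j < n" using permutes_in_image[OF u] by auto
      then show "z \<in> {(p, q). p < q \<and> q < n \<and> d q < d p}"
        using ij by (auto simp: A1_def A3_def g_def)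
    qed
  next
    show "{(p, q). p < q \<and> q < n \<and> d q < d p} \<subseteq> g ` (A1 \<union> A3)"
    proof
      fix z assume "z \<in> {(p, q). p < q \<and> q < n \<and> d q < d p}"
      then obtain p q where z: "z = (p,q)" "p < q" "q < n" "d q < d p" by auto
      define i where "i = inv u p"
      define j where "j = inv u q"
      have ui: "u i = p" "u j = q" unfolding i_def j_def using permutes_inverses[OF u] by auto
      have "i < n" "j < n" using permutes_in_image[OF u, of i] permutes_in_image[OF u, of j] ui z
        by auto
      have "i \<noteq> j" using ui z by auto
      then consider "i < j" | "j < i" by linarith
      then show "z \<in> g ` (A1 \<union> A3)"
      proof cases
        case 1
        then have "(i,j) \<in> A1" using ui z \<open>j < n\<close> by (auto simp: A1_def)
        moreover have "g (i,j) = z" using ui z by (auto simp: g_def)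
        ultimately show ?thesis by force
      next
        case 2
        then have "(j,i) \<in> A3" using ui z \<open>i < n\<close> by (auto simp: A3_def)
        moreover have "g (j,i) = z" using ui z by (auto simp: g_def)
        ultimately show ?thesis by force
      qed
    qed
  qed
  have "len n d = card (A1 \<union> A3)"
    unfolding len_def using card_image[OF ginj] gim by simp
  also have "\<dots> = card A1 + card A3"
    using fA1 fA3 by (simp add: card_Un_disjoint A1_def A3_def disjoint_iff)
  finally have L3: "len n d = card A1 + card A3" .
  have "len n (d \<circ> u) + len n u = len n d \<longleftrightarrow> A2 = {}"
    using L1 L2 L3 fA2 by auto
  also have "\<dots> \<longleftrightarrow> (\<forall>i j. i < j \<and> j < n \<and> u j < u i \<longrightarrow> \<not> d (u j) < d (u i))"
    by (auto simp: A2_def)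
  finally show ?thesis .
qed


lemma dominant_no132:
  assumes d: "d permutes {..<n}" and dom: "dominant n d"
    and h: "i < j" "j < k" "k < n" "d i < d k" "d k < d j"
  shows False
proof -
  have fin: "finite (d ` {i..<j})" and ne: "d ` {i..<j} \<noteq> {}" using h by auto
  obtain m where m: "m \<in> {i..<j}" "d m = Min (d ` {i..<j})"
    using Min_in[OF fin ne] by auto
  have mle: "d m \<le> d l" if "l \<in> {i..<j}" for l using m that fin by auto
  have dinj: "d a = d b \<Longrightarrow> a = b" for a b using permutes_inj[OF d] by (auto dest: injD)
  define Sm where "Sm = {l. m < l \<and> l < n \<and> d l < d m}"
  define Sj where "Sj = {l. j < l \<and> l < n \<and> d l < d j}"
  have "d m \<le> d i" using mle[of i] h by auto
  have sub: "Sm \<subseteq> Sj"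
  proof
    fix l assume l: "l \<in> Sm"
    have "\<not> l < j"
    proof
      assume "l < j" then have "d m \<le> d l" using mle[of l] l m by (auto simp: Sm_def)
      then show False using l by (auto simp: Sm_def)
    qed
    moreover have "l \<noteq> j" using l \<open>d m \<le> d i\<close> h by (auto simp: Sm_def)
    ultimately show "l \<in> Sj" using l \<open>d m \<le> d i\<close> h by (auto simp: Sm_def Sj_def)
  qed
  have "k \<in> Sj" "k \<notin> Sm" using h \<open>d m \<le> d i\<close> by (auto simp: Sj_def Sm_def)
  then have "Sm \<subset> Sj" using sub by blast
  moreover have "finite Sj" by (auto simp: Sj_def)
  ultimately have "card Sm < card Sj" by (rule psubset_card_mono[rotated])
  moreover have "perm_code n d j \<le> perm_code n d m"
    using dom m h unfolding dominant_def by auto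
  ultimately show False unfolding perm_code_def Sm_def Sj_def by simp
qed

lemma no132_dominant:
  assumes d: "d permutes {..<n}"
    and h: "\<And>i j k. i < j \<Longrightarrow> j < k \<Longrightarrow> k < n \<Longrightarrow> d i < d k \<Longrightarrow> d k < d j \<Longrightarrow> False"
  shows "dominant n d"
  unfolding dominant_def
proof (intro allI impI)
  fix i j assume ij: "i \<le> j \<and> j < n"
  have dinj: "d a = d b \<Longrightarrow> a = b" for a b using permutes_inj[OF d] by (auto dest: injD)
  show "perm_code n d j \<le> perm_code n d i"
  proof (cases "i = j")
    case True then show ?thesis by simp
  next
    case False
    then have "i < j" using ij by simp
    have "{l. j < l \<and> l < n \<and> d l < d j} \<subseteq> {l. i < l \<and> l < n \<and> d l < d i}"
    proof
      fix l assume l: "l \<in> {l. j < l \<and> l < n \<and> d l < d j}"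
      have "d i \<noteq> d j" using dinj \<open>i < j\<close> by blast
      have "d l \<noteq> d i" using dinj[of l i] \<open>i < j\<close> l by auto
      consider "d j < d i" | "d i < d j" using \<open>d i \<noteq> d j\<close> by linarith
      then show "l \<in> {l. i < l \<and> l < n \<and> d l < d i}"
      proof cases
        case 1 then show ?thesis using l \<open>i < j\<close> by auto
      next
        case 2
        have "\<not> d i < d l" using h[of i j l] l \<open>i < j\<close> 2 by auto
        then show ?thesis using l \<open>i < j\<close> \<open>d l \<noteq> d i\<close> by auto
      qed
    qed
    then show ?thesis unfolding perm_code_def by (intro card_mono) auto
  qed
qed


lemma amenable_imp_vex:
  assumes "amenable n w"
  shows "vexillary n w"
proof -
  obtain d u where d: "d permutes {..<n}" and dom: "dominant n d"
    and u: "u permutes {..<n}" and av: "avoids n u [1,2,0]" and wdu: "w = d \<circ> u"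
    and L: "len n (d \<circ> u) + len n u = len n d"
    using assms unfolding amenable_def modification_def by blast
  have cond: "\<And>i j. i < j \<Longrightarrow> j < n \<Longrightarrow> u j < u i \<Longrightarrow> \<not> w j < w i"
    using len_additive[OF d u] L wdu by auto
  have uinj: "u i = u j \<Longrightarrow> i = j" for i j using permutes_inj[OF u] by (auto dest: injD)
  have un: "i < n \<Longrightarrow> u i < n" for i using permutes_in_image[OF u] by auto
  show ?thesis
    unfolding vexillary_def avoids_def contains_2143
  proof
    assume "\<exists>a b c e. a < b \<and> b < c \<and> c < e \<and> e < n \<and> w b < w a \<and> w a < w e \<and> w e < w c"
    then obtain a b c e where h: "a < b" "b < c" "c < e" "e < n" "w b < w a" "w a < w e" "w e < w c"
      by blast
    have "u a \<noteq> u b" "u c \<noteq> u e" "u a \<noteq> u c" using uinj h by (metis less_irrefl, metis less_irrefl, metis less_irrefl order.strict_trans)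
    have ab: "u a < u b"
      using cond[of a b] h \<open>u a \<noteq> u b\<close> by linarith
    have ce: "u c < u e"
      using cond[of c e] h \<open>u c \<noteq> u e\<close> by linarith
    show False
    proof (cases "u a < u c")
      case True
      show False
        by (rule dominant_no132[OF d dom True ce un[of e]]) (use h wdu in auto)
    next
      case False
      then have "u c < u a" using \<open>u a \<noteq> u c\<close> by linarith
      then have "contains_pattern n u [1,2,0]"
        unfolding contains_231 using h ab by (intro exI[of _ a] exI[of _ b] exI[of _ c]) auto
      then show False using av unfolding avoids_def by blast
    qed
  qed
qed


definition JJ :: "nat \<Rightarrow> (nat \<Rightarrow> nat) \<Rightarrow> nat \<Rightarrow> nat" where
  "JJ n w i = Max (insert i {j. i < j \<and> j < n \<and> (\<exists>k. j < k \<and> k < n \<and> w i < w k \<and> w k < w j)})"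

definition prec :: "nat \<Rightarrow> (nat \<Rightarrow> nat) \<Rightarrow> nat \<Rightarrow> nat \<Rightarrow> bool" where
  "prec n w i k \<longleftrightarrow> (i < k \<and> JJ n w i < k) \<or> (k < i \<and> i \<le> JJ n w k)"

definition uu :: "nat \<Rightarrow> (nat \<Rightarrow> nat) \<Rightarrow> nat \<Rightarrow> nat" where
  "uu n w i = (if i < n then card {m. m < n \<and> prec n w m i} else i)"

context
  fixes n :: nat and w :: "nat \<Rightarrow> nat"
  assumes wp: "w permutes {..<n}"
    and vex: "\<And>a b c e. a < b \<Longrightarrow> b < c \<Longrightarrow> c < e \<Longrightarrow> e < n \<Longrightarrow>
               w b < w a \<Longrightarrow> w a < w e \<Longrightarrow> w e < w c \<Longrightarrow> False"
begin

lemma winj: "w a = w b \<Longrightarrow> a = b"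
  using permutes_inj[OF wp] by (auto dest: injD)

lemma J_fin: "finite (insert i {j. i < j \<and> j < n \<and> (\<exists>k. j < k \<and> k < n \<and> w i < w k \<and> w k < w j)})"
  by auto

lemma J_ge: "i \<le> JJ n w i"
  unfolding JJ_def using J_fin by (intro Max_ge) auto

lemma J_cases: "JJ n w i = i \<or> (i < JJ n w i \<and> JJ n w i < n \<and>
    (\<exists>k. JJ n w i < k \<and> k < n \<and> w i < w k \<and> w k < w (JJ n w i)))"
proof -
  have "JJ n w i \<in> insert i {j. i < j \<and> j < n \<and> (\<exists>k. j < k \<and> k < n \<and> w i < w k \<and> w k < w j)}"
    unfolding JJ_def using J_fin by (intro Max_in) auto
  then show ?thesis by auto
qed

lemma J_lt: "i < n \<Longrightarrow> JJ n w i < n"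
  using J_cases[of i] by auto

lemma J_max: "i < j \<Longrightarrow> j < k \<Longrightarrow> k < n \<Longrightarrow> w i < w k \<Longrightarrow> w k < w j \<Longrightarrow> j \<le> JJ n w i"
  unfolding JJ_def using J_fin by (intro Max_ge) auto

lemma J_big: "i < k \<Longrightarrow> k \<le> JJ n w i \<Longrightarrow> w i < w k"
proof -
  assume ik: "i < k" "k \<le> JJ n w i"
  then have "i < JJ n w i" by simp
  then obtain k' where k': "JJ n w i < n" "JJ n w i < k'" "k' < n" "w i < w k'" "w k' < w (JJ n w i)"
    using J_cases[of i] by auto
  show "w i < w k"
  proof (cases "k = JJ n w i")
    case True then show ?thesis using k' by simp
  next
    case False
    then have "k < JJ n w i" using ik by simp
    have "w k \<noteq> w i" using winj ik by (metis less_irrefl)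
    moreover have "\<not> w k < w i"
      using vex[of i k "JJ n w i" k'] k' ik \<open>k < JJ n w i\<close> by auto
    ultimately show ?thesis by linarith
  qed
qed

lemma J_lam: "i < k \<Longrightarrow> k \<le> JJ n w i \<Longrightarrow> JJ n w k \<le> JJ n w i"
proof -
  assume ik: "i < k" "k \<le> JJ n w i"
  show ?thesis
  proof (cases "JJ n w k = k")
    case True then show ?thesis using ik by simp
  next
    case False
    then obtain k2 where k2: "k < JJ n w k" "JJ n w k < n" "JJ n w k < k2" "k2 < n" "w k < w k2" "w k2 < w (JJ n w k)"
      using J_cases[of k] by auto
    have "w i < w k" using J_big ik by blast
    show ?thesis
      by (rule J_max) (use k2 ik \<open>w i < w k\<close> in auto)
  qed
qed

lemma prec_irrefl: "\<not> prec n w i i"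
  unfolding prec_def by auto

lemma prec_asym: "prec n w i k \<Longrightarrow> \<not> prec n w k i"
  unfolding prec_def by auto

lemma prec_total: "i \<noteq> k \<Longrightarrow> prec n w i k \<or> prec n w k i"
  unfolding prec_def by auto

lemma prec_trans: "prec n w a b \<Longrightarrow> prec n w b c \<Longrightarrow> prec n w a c"
proof -
  assume ab: "prec n w a b" and bc: "prec n w b c"
  have lam: "\<And>i k. i < k \<Longrightarrow> k \<le> JJ n w i \<Longrightarrow> JJ n w k \<le> JJ n w i" using J_lam by blast
  have ge: "\<And>i. i \<le> JJ n w i" using J_ge by blast
  consider "a < b" "b < c" | "a < c" "c < b" | "b < a" "a < c" | "b < c" "c < a" | "c < a" "a < b" | "c < b" "b < a"
    | "a = b" | "b = c" | "a = c"
    by linarith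
  then show "prec n w a c"
  proof cases
    case 1 then show ?thesis using ab bc unfolding prec_def by auto
  next
    case 2
    have "JJ n w a < c"
    proof (rule ccontr)
      assume "\<not> JJ n w a < c"
      then have "JJ n w c \<le> JJ n w a" using lam[of a c] 2 by auto
      then show False using ab bc 2 unfolding prec_def by auto
    qed
    then show ?thesis using 2 unfolding prec_def by auto
  next
    case 3
    then have "a \<le> JJ n w b" using ab unfolding prec_def by auto
    then have "JJ n w a \<le> JJ n w b" using lam[of b a] 3 by auto
    then show ?thesis using 3 bc unfolding prec_def by auto
  next
    case 4 then show ?thesis using ab bc unfolding prec_def by auto
  next
    case 5 then show ?thesis using ab bc unfolding prec_def by auto
  next
    case 6
    then have "a \<le> JJ n w b" "b \<le> JJ n w c" using ab bc unfolding prec_def by auto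
    then have "JJ n w b \<le> JJ n w c" using lam[of c b] 6 by auto
    then show ?thesis using 6 \<open>a \<le> JJ n w b\<close> unfolding prec_def by auto
  next
    case 7 then show ?thesis using ab prec_irrefl by auto
  next
    case 8 then show ?thesis using bc prec_irrefl by auto
  next
    case 9 then show ?thesis using ab bc prec_asym by auto
  qed
qed

lemma uu_lt: "i < n \<Longrightarrow> uu n w i < n"
proof -
  assume i: "i < n"
  have "{m. m < n \<and> prec n w m i} \<subseteq> {..<n} - {i}" using prec_irrefl by auto
  then have "card {m. m < n \<and> prec n w m i} \<le> card ({..<n} - {i})" by (intro card_mono) auto
  also have "\<dots> = n - 1" using i by simp
  finally show ?thesis using i unfolding uu_def by simp
qed

lemma uu_mono: "i < n \<Longrightarrow> k < n \<Longrightarrow> prec n w i k \<Longrightarrow> uu n w i < uu n w k"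
proof -
  assume h: "i < n" "k < n" "prec n w i k"
  have "{m. m < n \<and> prec n w m i} \<subset> {m. m < n \<and> prec n w m k}"
    using h prec_trans prec_irrefl by blast
  then have "card {m. m < n \<and> prec n w m i} < card {m. m < n \<and> prec n w m k}"
    by (intro psubset_card_mono) auto
  then show ?thesis using h unfolding uu_def by simp
qed

lemma uu_less_iff: "i < n \<Longrightarrow> k < n \<Longrightarrow> uu n w i < uu n w k \<longleftrightarrow> prec n w i k"
  using uu_mono prec_total prec_asym by (metis less_irrefl order.asym)

lemma uu_permutes: "uu n w permutes {..<n}"
proof (rule bij_imp_permutes)
  have inj: "inj_on (uu n w) {..<n}"
  proof (rule inj_onI)
    fix i k assume "i \<in> {..<n}" "k \<in> {..<n}" "uu n w i = uu n w k"
    then show "i = k" using uu_mono prec_total by (metis lessThan_iff less_irrefl)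
  qed
  moreover have "uu n w ` {..<n} \<subseteq> {..<n}" using uu_lt by auto
  ultimately have "uu n w ` {..<n} = {..<n}" by (intro endo_inj_surj) auto
  then show "bij_betw (uu n w) {..<n} {..<n}" using inj by (simp add: bij_betw_def)
next
  fix x assume "x \<notin> {..<n}" then show "uu n w x = x" unfolding uu_def by simp
qed


lemma prec_back: "prec n w x y \<Longrightarrow> y < x \<Longrightarrow> w y < w x"
  unfolding prec_def using J_big by auto

lemma vex_amenable: "amenable n w"
proof -
  define u where "u = uu n w"
  define d where "d = w \<circ> inv u"
  have up: "u permutes {..<n}" unfolding u_def by (rule uu_permutes)
  have dp: "d permutes {..<n}" unfolding d_def
    by (rule permutes_compose[OF permutes_inv[OF up] wp])
  have wdu: "w = d \<circ> u" unfolding d_def using permutes_inv_o(2)[OF up] by (simp add: comp_assoc)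
  have dui: "d (u i) = w i" for i using wdu by (metis comp_apply)
  have uless: "i < n \<Longrightarrow> k < n \<Longrightarrow> u i < u k \<longleftrightarrow> prec n w i k" for i k
    unfolding u_def by (rule uu_less_iff)
  have av: "avoids n u [1,2,0]"
    unfolding avoids_def contains_231
  proof
    assume "\<exists>a b c. a < b \<and> b < c \<and> c < n \<and> u c < u a \<and> u a < u b"
    then obtain a b c where h: "a < b" "b < c" "c < n" "u c < u a" "u a < u b" by blast
    have "prec n w c a" "prec n w a b" using uless h by auto
    then show False using h unfolding prec_def by auto
  qed
  have L: "len n (d \<circ> u) + len n u = len n d"
    unfolding len_additive[OF dp up]
  proof (intro allI impI)
    fix i j assume h: "i < j \<and> j < n \<and> u j < u i"
    then have "prec n w j i" using uless by auto
    then have "w i < w j" using prec_back h by auto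
    then show "\<not> d (u j) < d (u i)" using dui by simp
  qed
  have dom: "dominant n d"
  proof (rule no132_dominant[OF dp])
    fix P Q R assume h: "P < Q" "Q < R" "R < n" "d P < d R" "d R < d Q"
    define p where "p = inv u P"
    define q where "q = inv u Q"
    define r where "r = inv u R"
    have up': "u p = P" "u q = Q" "u r = R" unfolding p_def q_def r_def
      using permutes_inverses[OF up] by auto
    have lt: "p < n" "q < n" "r < n"
      using permutes_in_image[OF up, of p] permutes_in_image[OF up, of q]
        permutes_in_image[OF up, of r] up' h by auto
    have wv: "w p < w r" "w r < w q" using h up' dui by metis+
    have pq: "prec n w p q" "prec n w q r" using uless lt h up' by auto
    then have pr: "prec n w p r" using prec_trans by blast
    have "p \<noteq> q" "p \<noteq> r" "q \<noteq> r" using wv by auto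
    have "\<not> q < p" using prec_back pq wv by fastforce
    then have "p < q" using \<open>p \<noteq> q\<close> by linarith
    have "\<not> r < p" using prec_back pr wv by fastforce
    then have "p < r" using \<open>p \<noteq> r\<close> by linarith
    show False
    proof (cases "q < r")
      case True
      have "q \<le> JJ n w p" by (rule J_max) (use \<open>p < q\<close> True lt wv in auto)
      then have "prec n w q p" using \<open>p < q\<close> unfolding prec_def by auto
      then show False using pq prec_asym by blast
    next
      case False
      then have "r < q" using \<open>q \<noteq> r\<close> by linarith
      then have "q \<le> JJ n w r" using pq unfolding prec_def by auto
      then have "r < JJ n w r" using \<open>r < q\<close> by linarith
      then obtain k where k: "JJ n w r < n" "JJ n w r < k" "k < n" "w r < w k" "w k < w (JJ n w r)"
        using J_cases[of r] by auto
      have "JJ n w r \<le> JJ n w p"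
        by (rule J_max) (use k \<open>p < r\<close> \<open>r < JJ n w r\<close> wv in auto)
      moreover have "JJ n w p < q" using pq \<open>p < q\<close> unfolding prec_def by auto
      ultimately show False using \<open>q \<le> JJ n w r\<close> by linarith
    qed
  qed
  show ?thesis
    unfolding amenable_def modification_def
    using dp dom up av wdu L by blast
qed

end

theorem theorem2:
  fixes n :: nat and w :: "nat \<Rightarrow> nat"
  assumes "w permutes {..<n}"
  shows "amenable n w \<longleftrightarrow> vexillary n w"
proof
  assume "amenable n w" then show "vexillary n w" by (rule amenable_imp_vex)
next
  assume v: "vexillary n w"
  have "\<And>a b c e. a < b \<Longrightarrow> b < c \<Longrightarrow> c < e \<Longrightarrow> e < n \<Longrightarrow>
               w b < w a \<Longrightarrow> w a < w e \<Longrightarrow> w e < w c \<Longrightarrow> False"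
    using v unfolding vexillary_def avoids_def contains_2143 by blast
  then show "amenable n w" using vex_amenable[OF assms] by blast
qed

end
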